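(* Let $B\colon\mathbb{R}^n\times\mathbb{R}^n\to\mathbb{R}^n$ be a symmetric bilinear map. Then $\langle B(y,y),y\rangle_{\mathbb{R}^n}=0$ for all $y\in\mathbb{R}^n$ if and only if there exists a linear map $S\colon\mathbb{R}^n\to\mathfrak{so}(n)$ such that $B(y,y)=S(y)(y)$ for all $y\in\mathbb{R}^n$.
   Context: $\langle\cdot,\cdot\rangle_{\mathbb{R}^n}$ is the Euclidean inner product on $\mathbb{R}^n$, and $\mathfrak{so}(n)$ is the space of linear maps $q\colon\mathbb{R}^n\to\mathbb{R}^n$ that are skew-adjoint with respect to it. *)

theory Defs
  imports "HOL-Analysis.Analysis"
begin

definition so_n :: "(real^'n \<Rightarrow> real^'n) set" where
  "so_n = {q. linear q \<and> (\<forall>u v. inner (q u) v = - inner u (q v))}"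

end

theory Submission
  imports Defs
begin

lemma two_vec_inner[simp]: "((2::real^'n) * v) \<bullet> u = 2 * (v \<bullet> u)"
proof -
  have "(2::real^'n) * v = (2::real) *\<^sub>R v" by (simp add: vec_eq_iff)
  then show ?thesis by simp
qed

lemma polar:
  fixes B :: "real^'n \<Rightarrow> real^'n \<Rightarrow> real^'n"
  assumes bl: "bilinear B" and sy: "\<forall>x y. B x y = B y x"
    and z: "\<forall>y. inner (B y y) y = 0"
  shows "inner (B y y) w + 2 * inner (B y w) y = 0"
proof -
  have e: "inner (B (a+b) (a+b)) (a+b) = inner (B a a) a + inner (B b b) b
        + (inner (B a a) b + inner (B a b) a + inner (B a b) a) + (inner (B b b) a + inner (B a b) b + inner (B a b) b)" for a b
    using sy by (simp add: bilinear_ladd[OF bl] bilinear_radd[OF bl] inner_add_left inner_add_right)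
  have m: "B (-a) (-a) = B a a" "B a (-b) = - B a b" for a b
    by (simp_all add: bilinear_lneg[OF bl] bilinear_rneg[OF bl])
  have 1: "0 = (inner (B w w) y + 2 * inner (B w y) w) + (inner (B y y) w + 2 * inner (B w y) y)"
    using e[of w y] z by simp
  have 2: "0 = - (inner (B w w) y + 2 * inner (B w y) w) + (inner (B y y) w + 2 * inner (B w y) y)"
    using e[of "-w" y] z m(1)[of w] m(2)[of w y]
    apply (simp add: bilinear_lneg[OF bl] bilinear_rneg[OF bl])
    done
  from 1 2 sy show ?thesis by (simp add: algebra_simps)
qed

theorem lemma6:
  fixes B :: "real^'n \<Rightarrow> real^'n \<Rightarrow> real^'n"
  assumes "bilinear B"
    and "\<forall>x y. B x y = B y x"
  shows "(\<forall>y. inner (B y y) y = 0) \<longleftrightarrow>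
         (\<exists>S :: real^'n \<Rightarrow> real^'n \<Rightarrow> real^'n.
             (\<forall>x y. S (x + y) = (\<lambda>v. S x v + S y v)) \<and>
             (\<forall>c x. S (c *\<^sub>R x) = (\<lambda>v. c *\<^sub>R S x v)) \<and>
             (\<forall>y. S y \<in> so_n) \<and> (\<forall>y. B y y = S y y))"
proof
  assume z: "\<forall>y. inner (B y y) y = 0"
  have lin: "linear (B y)" for y using assms(1) by (simp add: bilinear_def)
  have linl: "linear (\<lambda>x. B x v)" for v using assms(1) by (simp add: bilinear_def)
  define C where "C y v = adjoint (B y) v" for y v
  have Ci: "inner (C y v) w = inner v (B y w)" for y v w
    unfolding C_def by (rule adjoint_clauses(2)[OF lin])
  have Clin: "linear (C y)" for y unfolding C_def by (rule adjoint_linear[OF lin])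
  have Cadd: "C (x+y) v = C x v + C y v" for x y v
    by (subst vector_eq_rdot[symmetric]) (simp add: Ci inner_add_left bilinear_ladd[OF assms(1)] inner_add_right)
  have Cmul: "C (c *\<^sub>R x) v = c *\<^sub>R C x v" for c x v
    by (subst vector_eq_rdot[symmetric]) (simp add: Ci bilinear_lmul[OF assms(1)])
  have Cyy: "C y y = - (1/2) *\<^sub>R B y y" for y
  proof (subst vector_eq_rdot[symmetric], intro allI)
    fix w
    have "inner (B y y) w + 2 * inner (B y w) y = 0" by (rule polar[OF assms z])
    moreover have "inner (C y y) w = inner (B y w) y" using Ci[of y y w] by (simp add: inner_commute)
    ultimately show "inner (C y y) w = inner (- (1/2) *\<^sub>R B y y) w"
      by simp
  qed
  define S where "S y v = (2/3) *\<^sub>R (B y v - C y v)" for y v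
  show "\<exists>S :: real^'n \<Rightarrow> real^'n \<Rightarrow> real^'n.
             (\<forall>x y. S (x + y) = (\<lambda>v. S x v + S y v)) \<and>
             (\<forall>c x. S (c *\<^sub>R x) = (\<lambda>v. c *\<^sub>R S x v)) \<and>
             (\<forall>y. S y \<in> so_n) \<and> (\<forall>y. B y y = S y y)"
  proof (intro exI[of _ S] conjI allI)
    fix x y show "S (x + y) = (\<lambda>v. S x v + S y v)"
      by (rule ext) (simp add: S_def Cadd bilinear_ladd[OF assms(1)] algebra_simps)
  next
    fix c x show "S (c *\<^sub>R x) = (\<lambda>v. c *\<^sub>R S x v)"
      by (rule ext) (simp add: S_def Cmul bilinear_lmul[OF assms(1)] algebra_simps)
  next
    fix y
    have "linear (S y)" unfolding S_def
      by (rule linearI) (simp_all add: linear_add[OF lin] linear_add[OF Clin]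
          linear_scale[OF lin] linear_scale[OF Clin] algebra_simps)
    moreover have "inner (S y u) v = - inner u (S y v)" for u v
    proof -
      have a: "inner v (C y u) = inner u (B y v)" "inner u (C y v) = inner v (B y u)"
        using Ci[of y u v] Ci[of y v u] by (simp_all add: inner_commute)
      have b: "inner (B y u) v = inner v (B y u)" "inner (C y u) v = inner v (C y u)"
        by (simp_all add: inner_commute)
      show ?thesis
        apply (simp add: S_def inner_diff_left inner_diff_right b a)
        apply (simp add: field_simps)
        done
    qed
    ultimately show "S y \<in> so_n" by (simp add: so_n_def)
  next
    fix y show "B y y = S y y" by (simp add: S_def Cyy vec_eq_iff field_simps)
  qed
next
  assume "\<exists>S :: real^'n \<Rightarrow> real^'n \<Rightarrow> real^'n.
             (\<forall>x y. S (x + y) = (\<lambda>v. S x v + S y v)) \<and>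
             (\<forall>c x. S (c *\<^sub>R x) = (\<lambda>v. c *\<^sub>R S x v)) \<and>
             (\<forall>y. S y \<in> so_n) \<and> (\<forall>y. B y y = S y y)"
  then obtain S :: "real^'n \<Rightarrow> real^'n \<Rightarrow> real^'n" where "\<forall>y. S y \<in> so_n" "\<forall>y. B y y = S y y" by blast
  then show "\<forall>y. inner (B y y) y = 0"
    by (auto simp: so_n_def) (metis inner_commute neg_equal_zero)
qed

end
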